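(* Let $f\in\mathbb{R}^{d_1\times\cdots\times d_m}$, $f\ge0$, be weakly irreducible and $1<p_1,\ldots,p_m<\infty$ such that there exists $i\in[m]$ with $(m-1)p_i'\le p_k$ for all $k\in[m]\setminus\{i\}$. Let $(\lambda_-^k)_{k\in\mathbb N}$, $(\lambda_+^k)_{k\in\mathbb N}$ be the sequences produced by HGPM. Then $$\lambda_-^k\le\lambda_-^{k+1}\le\|f\|_{p_1,\ldots,p_m}\le\lambda_+^{k+1}\le\lambda_+^k\qquad\forall k\in\mathbb N,$$ and when the algorithm stops (i.e. at the first $k$ with $\lambda_+^k-\lambda_-^k<\epsilon$) we have $\big|\tfrac{\lambda_-^k+\lambda_+^k}{2}-\|f\|_{p_1,\ldots,p_m}\big|<\epsilon$.
   Context: $f$ is identified with the multilinear form $f(\mathbf x)=\sum f_{j_1,\ldots,j_m}x_{1,j_1}\cdots x_{m,j_m}$; $\nabla_kf(\mathbf x)$ is the vector of partials $\partial f/\partial x_{k,j_k}$ (independent of $\mathbf x_k$, so $\nabla_if$ is defined on $\mathcal R^{d-d_i}=\prod_{k\ne i}\mathbb{R}^{d_k}$). $p'=p/(p-1)$; $\psi_q(\mathbf y)_j=|y_j|^{q-1}\mathrm{sign}(y_j)$. $\|f\|_{p_1,\ldots,p_m}=\max|f(\mathbf x)|/\prod_k\|\mathbf x_k\|_{p_k}$. $\mathcal S^{d-d_i}_{++}=\{\mathbf x\in\mathcal R^{d-d_i}:\mathbf x>0,\|\mathbf x_k\|_{p_k}=1\ \forall k\ne i\}$. For $k\ne i$,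 $s_{i,k}(\mathbf x)=\psi_{p_k'}\big(\nabla_kf(\mathbf x_1,\ldots,\mathbf x_{i-1},\psi_{p_i'}(\nabla_if(\mathbf x)),\mathbf x_{i+1},\ldots,\mathbf x_m)\big)$. HGPM with this index $i$ (if $m=2$, $i$ chosen with $p_i\le p_k$ for $k\ne i$), tolerance $\epsilon>0$ and starting point $\mathbf x^0\in\mathcal S^{d-d_i}_{++}$: for $k=0,1,\dots$, $\mathbf z^k=(s_{i,l}(\mathbf x^k))_{l\ne i}$, $\lambda_-^{k+1}=\prod_{l\ne i}\min_{j_l}(z^k_{l,j_l}/x^k_{l,j_l})^{(p_l-1)/(p_i'(m-1))}$, $\lambda_+^{k+1}=\prod_{l\ne i}\max_{j_l}(z^k_{l,j_l}/x^k_{l,j_l})^{(p_l-1)/(p_i'(m-1))}$, $\mathbf x^{k+1}=(\mathbf z^k_l/\|\mathbf z^k_l\|_{p_l})_{l\ne i}$; stop when $\lambda_+^k-\lambda_-^k<\epsilon$. The $\lambda$-sequences are indexed by $\mathbb N=\{1,2,\dots\}$. Weak irreducibility: the undirected graph on $\bigcup_k\{k\}\times[d_k]$ with $(k,j_k)\sim(l,j_l)$ ($k\ne l$) iff $f_{j_1,\ldots,j_m}>0$ for some choice of the remaining indices, is connected. *)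

theory Defs
  imports Complex_Main "HOL-Library.FuncSet"
begin

text \<open>Modes are indexed 0..m-1, the entries of mode k by 0..d k - 1.
  A tensor is a function on index tuples J (with J k < d k for k < m).
  A point of the product space is x :: nat => nat => real, x k being the
  vector of mode k (entries j < d k).\<close>

definition idx :: "nat \<Rightarrow> (nat \<Rightarrow> nat) \<Rightarrow> (nat \<Rightarrow> nat) set" where
  "idx m d = PiE {..<m} (\<lambda>k. {..<d k})"

definition multiform :: "nat \<Rightarrow> (nat \<Rightarrow> nat) \<Rightarrow> ((nat \<Rightarrow> nat) \<Rightarrow> real) \<Rightarrow> (nat \<Rightarrow> nat \<Rightarrow> real) \<Rightarrow> real" where
  "multiform m d f x = (\<Sum>J\<in>idx m d. f J * (\<Prod>k<m. x k (J k)))"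

definition grad :: "nat \<Rightarrow> (nat \<Rightarrow> nat) \<Rightarrow> ((nat \<Rightarrow> nat) \<Rightarrow> real) \<Rightarrow> nat \<Rightarrow> (nat \<Rightarrow> nat \<Rightarrow> real) \<Rightarrow> nat \<Rightarrow> real" where
  "grad m d f k x j = (\<Sum>J\<in>{J\<in>idx m d. J k = j}. f J * (\<Prod>l\<in>{..<m} - {k}. x l (J l)))"

definition pnorm :: "real \<Rightarrow> nat \<Rightarrow> (nat \<Rightarrow> real) \<Rightarrow> real" where
  "pnorm p n v = (\<Sum>j<n. \<bar>v j\<bar> powr p) powr (1 / p)"

definition hconj :: "real \<Rightarrow> real" where
  "hconj p = p / (p - 1)"

definition psi :: "real \<Rightarrow> (nat \<Rightarrow> real) \<Rightarrow> nat \<Rightarrow> real" where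
  "psi q v j = \<bar>v j\<bar> powr (q - 1) * sgn (v j)"

definition tnorm :: "nat \<Rightarrow> (nat \<Rightarrow> nat) \<Rightarrow> (nat \<Rightarrow> real) \<Rightarrow> ((nat \<Rightarrow> nat) \<Rightarrow> real) \<Rightarrow> real" where
  "tnorm m d p f = Sup {\<bar>multiform m d f x\<bar> / (\<Prod>k<m. pnorm (p k) (d k) (x k)) | x.
        \<forall>k<m. \<exists>j<d k. x k j \<noteq> 0}"

definition wi_edge :: "nat \<Rightarrow> (nat \<Rightarrow> nat) \<Rightarrow> ((nat \<Rightarrow> nat) \<Rightarrow> real) \<Rightarrow> ((nat \<times> nat) \<times> (nat \<times> nat)) set" where
  "wi_edge m d f = {((k, a), (l, b)) | k a l b. k \<noteq> l \<and>
        (\<exists>J\<in>idx m d. J k = a \<and> J l = b \<and> f J > 0)}"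

definition weakly_irreducible :: "nat \<Rightarrow> (nat \<Rightarrow> nat) \<Rightarrow> ((nat \<Rightarrow> nat) \<Rightarrow> real) \<Rightarrow> bool" where
  "weakly_irreducible m d f \<longleftrightarrow>
     (\<forall>u\<in>Sigma {..<m} (\<lambda>k. {..<d k}). \<forall>v\<in>Sigma {..<m} (\<lambda>k. {..<d k}).
        (u, v) \<in> (wi_edge m d f)\<^sup>*)"

text \<open>z^k = (s_{i,l}(x^k))_{l \<noteq> i}; the i-th component is unused (set to 0)\<close>
definition hgpm_z :: "nat \<Rightarrow> (nat \<Rightarrow> nat) \<Rightarrow> (nat \<Rightarrow> real) \<Rightarrow> ((nat \<Rightarrow> nat) \<Rightarrow> real) \<Rightarrow> nat
     \<Rightarrow> (nat \<Rightarrow> nat \<Rightarrow> real) \<Rightarrow> nat \<Rightarrow> nat \<Rightarrow> real" where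
  "hgpm_z m d p f i x l =
     (if l = i then (\<lambda>_. 0)
      else psi (hconj (p l))
             (grad m d f l (x(i := psi (hconj (p i)) (grad m d f i x)))))"

definition hgpm_next :: "nat \<Rightarrow> (nat \<Rightarrow> nat) \<Rightarrow> (nat \<Rightarrow> real) \<Rightarrow> ((nat \<Rightarrow> nat) \<Rightarrow> real) \<Rightarrow> nat
     \<Rightarrow> (nat \<Rightarrow> nat \<Rightarrow> real) \<Rightarrow> nat \<Rightarrow> nat \<Rightarrow> real" where
  "hgpm_next m d p f i x l =
     (let z = hgpm_z m d p f i x in
      if l = i then (\<lambda>_. 0) else (\<lambda>j. z l j / pnorm (p l) (d l) (z l)))"

definition hgpm_x :: "nat \<Rightarrow> (nat \<Rightarrow> nat) \<Rightarrow> (nat \<Rightarrow> real) \<Rightarrow> ((nat \<Rightarrow> nat) \<Rightarrow> real) \<Rightarrow> nat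
     \<Rightarrow> (nat \<Rightarrow> nat \<Rightarrow> real) \<Rightarrow> nat \<Rightarrow> nat \<Rightarrow> nat \<Rightarrow> real" where
  "hgpm_x m d p f i x0 k = (hgpm_next m d p f i ^^ k) x0"

text \<open>lambda_-^{k} and lambda_+^{k} for k >= 1 (computed from x^{k-1} and z^{k-1})\<close>
definition hgpm_lam_minus :: "nat \<Rightarrow> (nat \<Rightarrow> nat) \<Rightarrow> (nat \<Rightarrow> real) \<Rightarrow> ((nat \<Rightarrow> nat) \<Rightarrow> real) \<Rightarrow> nat
     \<Rightarrow> (nat \<Rightarrow> nat \<Rightarrow> real) \<Rightarrow> nat \<Rightarrow> real" where
  "hgpm_lam_minus m d p f i x0 k =
     (let x = hgpm_x m d p f i x0 (k - 1); z = hgpm_z m d p f i x in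
      \<Prod>l\<in>{..<m} - {i}. Min ((\<lambda>j. (z l j / x l j) powr ((p l - 1) / (hconj (p i) * (real m - 1)))) ` {..<d l}))"

definition hgpm_lam_plus :: "nat \<Rightarrow> (nat \<Rightarrow> nat) \<Rightarrow> (nat \<Rightarrow> real) \<Rightarrow> ((nat \<Rightarrow> nat) \<Rightarrow> real) \<Rightarrow> nat
     \<Rightarrow> (nat \<Rightarrow> nat \<Rightarrow> real) \<Rightarrow> nat \<Rightarrow> real" where
  "hgpm_lam_plus m d p f i x0 k =
     (let x = hgpm_x m d p f i x0 (k - 1); z = hgpm_z m d p f i x in
      \<Prod>l\<in>{..<m} - {i}. Max ((\<lambda>j. (z l j / x l j) powr ((p l - 1) / (hconj (p i) * (real m - 1)))) ` {..<d l}))"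

end

theory Submission
  imports Defs "HOL-Analysis.Analysis"
begin


lemma finite_idx: "finite (idx m d)"
  by (simp add: idx_def finite_PiE)

lemma idx_lt: "J \<in> idx m d \<Longrightarrow> k < m \<Longrightarrow> J k < d k"
  by (auto simp: idx_def PiE_def Pi_def)

lemma euler_gen:
  assumes "k < m"
  shows "(\<Sum>J\<in>idx m d. f J * (\<Prod>l<m. v l (J l)) * \<phi> (J k))
       = (\<Sum>j<d k. v k j * grad m d f k v j * \<phi> j)"
proof -
  have img: "(\<lambda>J. J k) ` idx m d \<subseteq> {..<d k}" using assms idx_lt by auto
  have "(\<Sum>J\<in>idx m d. f J * (\<Prod>l<m. v l (J l)) * \<phi> (J k))
     = (\<Sum>j<d k. \<Sum>J\<in>{J. J \<in> idx m d \<and> J k = j}. f J * (\<Prod>l<m. v l (J l)) * \<phi> (J k))"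
    by (rule sum.group[symmetric, OF finite_idx _ img]) simp
  also have "\<dots> = (\<Sum>j<d k. v k j * grad m d f k v j * \<phi> j)"
  proof (rule sum.cong[OF refl])
    fix j assume "j \<in> {..<d k}"
    have pr: "(\<Prod>l<m. v l (J l)) = v k (J k) * (\<Prod>l\<in>{..<m} - {k}. v l (J l))" for J
      using assms by (subst prod.remove[of "{..<m}" k]) auto
    show "(\<Sum>J\<in>{J. J \<in> idx m d \<and> J k = j}. f J * (\<Prod>l<m. v l (J l)) * \<phi> (J k)) = v k j * grad m d f k v j * \<phi> j"
      unfolding grad_def pr sum_distrib_left sum_distrib_right
      by (rule sum.cong) (auto simp: algebra_simps)
  qed
  finally show ?thesis .
qed

lemma euler:
  assumes "k < m"
  shows "multiform m d f v = (\<Sum>j<d k. v k j * grad m d f k v j)"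
  using euler_gen[OF assms, of f v "\<lambda>_. 1"] by (simp add: multiform_def)

lemma grad_upd: "grad m d f k (v(k := w)) = grad m d f k v"
  unfolding grad_def by (intro ext sum.cong refl prod.cong) auto

lemma grad_cong:
  assumes "\<And>l j. l < m \<Longrightarrow> l \<noteq> k \<Longrightarrow> j < d l \<Longrightarrow> u l j = v l j"
  shows "grad m d f k u j = grad m d f k v j"
  unfolding grad_def using assms idx_lt by (intro sum.cong refl prod.cong) auto

lemma grad_scale_le:
  assumes fn: "\<forall>J\<in>idx m d. f J \<ge> 0"
    and h: "\<And>l j. l < m \<Longrightarrow> l \<noteq> k \<Longrightarrow> j < d l \<Longrightarrow> 0 \<le> u l j \<and> 0 \<le> c l \<and> c l * u l j \<le> v l j"
  shows "(\<Prod>l\<in>{..<m}-{k}. c l) * grad m d f k u j \<le> grad m d f k v j"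
  unfolding grad_def sum_distrib_left
proof (rule sum_mono)
  fix J assume J: "J \<in> {J \<in> idx m d. J k = j}"
  have "(\<Prod>l\<in>{..<m}-{k}. c l) * (\<Prod>l\<in>{..<m} - {k}. u l (J l)) = (\<Prod>l\<in>{..<m} - {k}. c l * u l (J l))"
    by (simp add: prod.distrib)
  also have "\<dots> \<le> (\<Prod>l\<in>{..<m} - {k}. v l (J l))"
    apply (rule prod_mono)
    subgoal for l using h[of l "J l"] J idx_lt[of J m d l] by auto
    done
  finally have cal: "(\<Prod>l\<in>{..<m}-{k}. c l) * (\<Prod>l\<in>{..<m} - {k}. u l (J l)) \<le> (\<Prod>l\<in>{..<m} - {k}. v l (J l))" .
  show "(\<Prod>l\<in>{..<m}-{k}. c l) * (f J * (\<Prod>l\<in>{..<m} - {k}. u l (J l))) \<le> f J * (\<Prod>l\<in>{..<m} - {k}. v l (J l))"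
  proof -
    have "f J \<ge> 0" using fn J by auto
    have "f J * ((\<Prod>l\<in>{..<m}-{k}. c l) * (\<Prod>l\<in>{..<m} - {k}. u l (J l))) \<le> f J * (\<Prod>l\<in>{..<m} - {k}. v l (J l))"
      using mult_left_mono[OF cal \<open>0 \<le> f J\<close>] .
    then show ?thesis by (simp add: algebra_simps)
  qed
qed

lemma grad_scale_ge:
  assumes fn: "\<forall>J\<in>idx m d. f J \<ge> 0"
    and h: "\<And>l j. l < m \<Longrightarrow> l \<noteq> k \<Longrightarrow> j < d l \<Longrightarrow> 0 \<le> v l j \<and> v l j \<le> c l * u l j"
  shows "grad m d f k v j \<le> (\<Prod>l\<in>{..<m}-{k}. c l) * grad m d f k u j"
  unfolding grad_def sum_distrib_left
proof (rule sum_mono)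
  fix J assume J: "J \<in> {J \<in> idx m d. J k = j}"
  have "(\<Prod>l\<in>{..<m} - {k}. v l (J l)) \<le> (\<Prod>l\<in>{..<m} - {k}. c l * u l (J l))"
    by (rule prod_mono) (use h J idx_lt in auto)
  also have "\<dots> = (\<Prod>l\<in>{..<m}-{k}. c l) * (\<Prod>l\<in>{..<m} - {k}. u l (J l))"
    by (simp add: prod.distrib)
  finally have cal: "(\<Prod>l\<in>{..<m} - {k}. v l (J l)) \<le> (\<Prod>l\<in>{..<m}-{k}. c l) * (\<Prod>l\<in>{..<m} - {k}. u l (J l))" .
  show "f J * (\<Prod>l\<in>{..<m} - {k}. v l (J l)) \<le> (\<Prod>l\<in>{..<m}-{k}. c l) * (f J * (\<Prod>l\<in>{..<m} - {k}. u l (J l)))"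
  proof -
    have "f J \<ge> 0" using fn J by auto
    have "f J * (\<Prod>l\<in>{..<m} - {k}. v l (J l)) \<le> f J * ((\<Prod>l\<in>{..<m}-{k}. c l) * (\<Prod>l\<in>{..<m} - {k}. u l (J l)))"
      using mult_left_mono[OF cal \<open>0 \<le> f J\<close>] .
    then show ?thesis by (simp add: algebra_simps)
  qed
qed

lemma grad_nonneg:
  assumes fn: "\<forall>J\<in>idx m d. f J \<ge> 0"
    and h: "\<And>l j. l < m \<Longrightarrow> l \<noteq> k \<Longrightarrow> j < d l \<Longrightarrow> 0 \<le> v l j"
  shows "0 \<le> grad m d f k v j"
  unfolding grad_def using fn h idx_lt by (intro sum_nonneg mult_nonneg_nonneg prod_nonneg) auto

lemma multiform_scale:
  "multiform m d f (\<lambda>k j. c k * v k j) = (\<Prod>k<m. c k) * multiform m d f v"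
  unfolding multiform_def sum_distrib_left
  by (rule sum.cong) (auto simp: prod.distrib algebra_simps)

lemma multiform_abs:
  assumes fn: "\<forall>J\<in>idx m d. f J \<ge> 0"
  shows "\<bar>multiform m d f v\<bar> \<le> multiform m d f (\<lambda>k j. \<bar>v k j\<bar>)"
  unfolding multiform_def
  by (rule order.trans[OF sum_abs]) (use fn in \<open>auto simp: abs_mult abs_prod intro!: sum_mono\<close>)

lemma wamgm:
  fixes a \<theta> :: "'a \<Rightarrow> real"
  assumes S: "finite S" and th: "\<And>k. k \<in> S \<Longrightarrow> \<theta> k \<ge> 0" and a: "\<And>k. k \<in> S \<Longrightarrow> a k \<ge> 0"
    and s1: "(\<Sum>k\<in>S. \<theta> k) = 1"
  shows "(\<Prod>k\<in>S. a k powr \<theta> k) \<le> (\<Sum>k\<in>S. \<theta> k * a k)"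
proof (cases "\<exists>k\<in>S. a k = 0")
  case True
  then have "(\<Prod>k\<in>S. a k powr \<theta> k) = 0" using S by auto
  then show ?thesis using th a by (simp add: sum_nonneg)
next
  case False
  then have apos: "\<And>k. k \<in> S \<Longrightarrow> a k > 0" using a by force
  have Sne: "S \<noteq> {}" using s1 by auto
  have "(\<Sum>k\<in>S. \<theta> k * ln (a k)) \<le> ln (\<Sum>k\<in>S. \<theta> k *\<^sub>R a k)"
    by (rule concave_on_sum[OF S Sne ln_concave s1]) (use th apos in auto)
  moreover have pos: "(\<Sum>k\<in>S. \<theta> k * a k) > 0"
  proof -
    obtain k where "k \<in> S" "\<theta> k > 0" using s1 th
      by (metis less_eq_real_def sum_nonpos zero_less_one not_less)
    then have "\<theta> k * a k > 0" using apos by auto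
    have nn: "\<And>x. x \<in> S \<Longrightarrow> 0 \<le> \<theta> x * a x" using th apos by (meson less_imp_le mult_nonneg_nonneg)
    have "\<theta> k * a k > 0" using apos \<open>\<theta> k > 0\<close> \<open>k \<in> S\<close> by auto
    moreover have "\<theta> k * a k \<le> (\<Sum>k\<in>S. \<theta> k * a k)"
      by (rule member_le_sum) (use \<open>k \<in> S\<close> S nn in auto)
    ultimately show ?thesis by linarith
  qed
  ultimately have L: "(\<Sum>k\<in>S. \<theta> k * ln (a k)) \<le> ln (\<Sum>k\<in>S. \<theta> k * a k)" by simp
  have "exp (\<Sum>k\<in>S. \<theta> k * ln (a k)) \<le> exp (ln (\<Sum>k\<in>S. \<theta> k * a k))"
    using L by (simp only: exp_le_cancel_iff)
  then have "exp (\<Sum>k\<in>S. \<theta> k * ln (a k)) \<le> (\<Sum>k\<in>S. \<theta> k * a k)"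
    using pos by simp
  moreover have "exp (\<Sum>k\<in>S. \<theta> k * ln (a k)) = (\<Prod>k\<in>S. exp (\<theta> k * ln (a k)))"
    using S by (simp add: exp_sum)
  moreover have "\<dots> = (\<Prod>k\<in>S. a k powr \<theta> k)"
  proof (intro prod.cong refl)
    fix k assume "k \<in> S" then have "a k > 0" by (rule apos)
    then show "exp (\<theta> k * ln (a k)) = a k powr \<theta> k" by (simp add: powr_def)
  qed
  ultimately show ?thesis by simp
qed




lemma pnorm_nonneg: "pnorm p n v \<ge> 0"
  by (simp add: pnorm_def)

lemma pnorm_scale:
  assumes "p > 0" "c \<ge> 0"
  shows "pnorm p n (\<lambda>j. c * v j) = c * pnorm p n v"
proof -
  have "(\<Sum>j<n. \<bar>c * v j\<bar> powr p) = c powr p * (\<Sum>j<n. \<bar>v j\<bar> powr p)"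
    using assms by (simp add: abs_mult powr_mult sum_distrib_left)
  then have "pnorm p n (\<lambda>j. c * v j) = (c powr p) powr (1/p) * (\<Sum>j<n. \<bar>v j\<bar> powr p) powr (1/p)"
    by (simp add: pnorm_def powr_mult)
  also have "(c powr p) powr (1/p) = c" using assms by (simp add: powr_powr)
  finally show ?thesis by (simp add: pnorm_def)
qed

lemma pnorm_mono:
  assumes "p > 0" "\<And>j. j < n \<Longrightarrow> \<bar>u j\<bar> \<le> \<bar>v j\<bar>"
  shows "pnorm p n u \<le> pnorm p n v"
  unfolding pnorm_def using assms
  by (intro powr_mono2 sum_mono sum_nonneg) auto

lemma pnorm_entry:
  assumes "p > 0" "j < n"
  shows "\<bar>v j\<bar> \<le> pnorm p n v"
proof -
  have "\<bar>v j\<bar> = (\<bar>v j\<bar> powr p) powr (1/p)" using assms by (simp add: powr_powr)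
  also have "\<dots> \<le> pnorm p n v" unfolding pnorm_def using assms
    by (intro powr_mono2 member_le_sum) auto
  finally show ?thesis .
qed

lemma pnorm_pos:
  assumes "p > 0" "j < n" "v j \<noteq> 0"
  shows "pnorm p n v > 0"
  using pnorm_entry[OF assms(1,2), of v] assms(3) by linarith

lemma pnorm_one:
  assumes "p > 0" "pnorm p n v = 1"
  shows "(\<Sum>j<n. \<bar>v j\<bar> powr p) = 1"
proof -
  have "(\<Sum>j<n. \<bar>v j\<bar> powr p) = ((\<Sum>j<n. \<bar>v j\<bar> powr p) powr (1/p)) powr p"
    using assms by (simp add: powr_powr sum_nonneg)
  also have "\<dots> = 1" using assms by (simp add: pnorm_def)
  finally show ?thesis .
qed

lemma pnorm_normalize:
  assumes "p > 0" "pnorm p n v > 0"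
  shows "pnorm p n (\<lambda>j. v j / pnorm p n v) = 1"
  using pnorm_scale[OF assms(1), of "1 / pnorm p n v" n v] assms by simp

definition tset where
  "tset m d p f = {\<bar>multiform m d f x\<bar> / (\<Prod>k<m. pnorm (p k) (d k) (x k)) | x.
        \<forall>k<m. \<exists>j<d k. x k j \<noteq> 0}"

lemma tset_bdd:
  assumes pp: "\<forall>k<m. p k > 0"
  shows "bdd_above (tset m d p f)"
proof (rule bdd_aboveI)
  fix t assume "t \<in> tset m d p f"
  then obtain x where t: "t = \<bar>multiform m d f x\<bar> / (\<Prod>k<m. pnorm (p k) (d k) (x k))"
    and x: "\<forall>k<m. \<exists>j<d k. x k j \<noteq> 0" unfolding tset_def by auto
  have P: "(\<Prod>k<m. pnorm (p k) (d k) (x k)) > 0"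
    using x pp pnorm_pos by (intro prod_pos) blast
  have "\<bar>multiform m d f x\<bar> \<le> (\<Sum>J\<in>idx m d. \<bar>f J\<bar> * (\<Prod>k<m. \<bar>x k (J k)\<bar>))"
    unfolding multiform_def by (rule order.trans[OF sum_abs]) (simp add: abs_mult abs_prod)
  also have "\<dots> \<le> (\<Sum>J\<in>idx m d. \<bar>f J\<bar> * (\<Prod>k<m. pnorm (p k) (d k) (x k)))"
    by (intro sum_mono mult_left_mono prod_mono) (use pp idx_lt pnorm_entry in auto)
  finally have "\<bar>multiform m d f x\<bar> \<le> (\<Sum>J\<in>idx m d. \<bar>f J\<bar>) * (\<Prod>k<m. pnorm (p k) (d k) (x k))"
    by (simp add: sum_distrib_right)
  then show "t \<le> (\<Sum>J\<in>idx m d. \<bar>f J\<bar>)" using P t by (simp add: divide_le_eq)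
qed

lemma tnorm_ge:
  assumes pp: "\<forall>k<m. p k > 0" and x: "\<forall>k<m. \<exists>j<d k. x k j \<noteq> 0"
  shows "\<bar>multiform m d f x\<bar> / (\<Prod>k<m. pnorm (p k) (d k) (x k)) \<le> tnorm m d p f"
  unfolding tnorm_def
  by (rule cSup_upper[OF _ tset_bdd[OF pp, where d=d and f=f, unfolded tset_def]]) (use x in auto)

lemma tnorm_le:
  assumes dpos: "\<forall>k<m. d k \<ge> 1"
    and h: "\<And>x. \<forall>k<m. \<exists>j<d k. x k j \<noteq> 0 \<Longrightarrow> \<bar>multiform m d f x\<bar> / (\<Prod>k<m. pnorm (p k) (d k) (x k)) \<le> M"
  shows "tnorm m d p f \<le> M"
  unfolding tnorm_def
proof (rule cSup_least)
  have "\<forall>k<m. 0 < d k" using dpos by auto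
  then have "\<forall>k<m. \<exists>j<d k. (\<lambda>k j. 1::real) k j \<noteq> 0" by auto
  then have "\<bar>multiform m d f (\<lambda>k j. 1)\<bar> / (\<Prod>k<m. pnorm (p k) (d k) ((\<lambda>k j. 1::real) k))
     \<in> {\<bar>multiform m d f x\<bar> / (\<Prod>k<m. pnorm (p k) (d k) (x k)) | x. \<forall>k<m. \<exists>j<d k. x k j \<noteq> 0}"
    by (intro CollectI exI[where x="\<lambda>k j. 1::real"] conjI refl)
  then show "{\<bar>multiform m d f x\<bar> / (\<Prod>k<m. pnorm (p k) (d k) (x k)) | x. \<forall>k<m. \<exists>j<d k. x k j \<noteq> 0} \<noteq> {}"
    by (metis empty_iff)
next
  fix t assume "t \<in> {\<bar>multiform m d f x\<bar> / (\<Prod>k<m. pnorm (p k) (d k) (x k)) | x. \<forall>k<m. \<exists>j<d k. x k j \<noteq> 0}"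
  then obtain x where "t = \<bar>multiform m d f x\<bar> / (\<Prod>k<m. pnorm (p k) (d k) (x k))" "\<forall>k<m. \<exists>j<d k. x k j \<noteq> 0"
    by blast
  then show "t \<le> M" using h by simp
qed




lemma Min_powr:
  fixes r :: "nat \<Rightarrow> real"
  assumes "finite S" "S \<noteq> {}" "\<And>j. j \<in> S \<Longrightarrow> r j > 0" "b \<ge> 0"
  shows "Min ((\<lambda>j. r j powr b) ` S) = Min (r ` S) powr b"
proof -
  have M: "Min (r ` S) \<in> r ` S" using assms by (intro Min_in) auto
  show ?thesis
  proof (rule antisym)
    from M obtain j0 where "j0 \<in> S" "Min (r ` S) = r j0" by auto
    then show "Min ((\<lambda>j. r j powr b) ` S) \<le> Min (r ` S) powr b"
      using assms by (metis Min_le finite_imageI imageI)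
    show "Min (r ` S) powr b \<le> Min ((\<lambda>j. r j powr b) ` S)"
    proof (rule Min.boundedI)
      show "finite ((\<lambda>j. r j powr b) ` S)" "(\<lambda>j. r j powr b) ` S \<noteq> {}" using assms by auto
      fix t assume "t \<in> (\<lambda>j. r j powr b) ` S"
      then obtain j where j: "j \<in> S" "t = r j powr b" by auto
      have "Min (r ` S) \<le> r j" using assms j by (intro Min_le) auto
      moreover have "Min (r ` S) \<ge> 0" using M assms by (auto intro: less_imp_le)
      ultimately show "Min (r ` S) powr b \<le> t" using j assms by (simp add: powr_mono2)
    qed
  qed
qed

lemma Max_powr:
  fixes r :: "nat \<Rightarrow> real"
  assumes "finite S" "S \<noteq> {}" "\<And>j. j \<in> S \<Longrightarrow> r j > 0" "b \<ge> 0"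
  shows "Max ((\<lambda>j. r j powr b) ` S) = Max (r ` S) powr b"
proof -
  have M: "Max (r ` S) \<in> r ` S" using assms by (intro Max_in) auto
  show ?thesis
  proof (rule antisym)
    from M obtain j0 where "j0 \<in> S" "Max (r ` S) = r j0" by auto
    then show "Max (r ` S) powr b \<le> Max ((\<lambda>j. r j powr b) ` S)"
      using assms by (metis Max_ge finite_imageI imageI)
    show "Max ((\<lambda>j. r j powr b) ` S) \<le> Max (r ` S) powr b"
    proof (rule Max.boundedI)
      show "finite ((\<lambda>j. r j powr b) ` S)" "(\<lambda>j. r j powr b) ` S \<noteq> {}" using assms by auto
      fix t assume "t \<in> (\<lambda>j. r j powr b) ` S"
      then obtain j where j: "j \<in> S" "t = r j powr b" by auto
      have "r j \<le> Max (r ` S)" using assms j by (intro Max_ge) auto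
      then show "t \<le> Max (r ` S) powr b" using j assms by (simp add: powr_mono2 less_imp_le)
    qed
  qed
qed

lemma young2:
  fixes w x s p :: real
  assumes "0 \<le> w" "0 < x" "0 < s" "s \<le> p"
  shows "w powr s * x powr (p - s) \<le> (s / p) * w powr p + (1 - s / p) * x powr p"
proof (cases "w = 0")
  case True
  then show ?thesis using assms by simp
next
  case False
  then have w: "w > 0" using assms by auto
  have "(w powr p) powr (s/p) * (x powr p) powr (1 - s/p) \<le> (s / p) * w powr p + (1 - s / p) * x powr p"
    using assms w by (intro Youngs_inequality_0) auto
  moreover have "(w powr p) powr (s/p) = w powr s" using assms by (simp add: powr_powr)
  moreover have "(x powr p) powr (1 - s/p) = x powr (p - s)" using assms
    by (simp add: powr_powr algebra_simps)
  ultimately show ?thesis by simp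
qed

lemma psi_pos: "v j > 0 \<Longrightarrow> psi r v j = v j powr (r - 1)"
  by (simp add: psi_def)

lemma hconj_m1: "p > 1 \<Longrightarrow> hconj p - 1 = 1 / (p - 1)"
  by (simp add: hconj_def field_simps)

locale hg =
  fixes m :: nat and d :: "nat \<Rightarrow> nat" and p :: "nat \<Rightarrow> real" and f :: "(nat \<Rightarrow> nat) \<Rightarrow> real" and i :: nat
  assumes m2: "m \<ge> 2" and dpos: "\<forall>k<m. d k \<ge> 1" and fnonneg: "\<forall>J\<in>idx m d. f J \<ge> 0"
    and wirr: "weakly_irreducible m d f" and prange: "\<forall>k<m. 1 < p k" and i: "i < m"
    and icond: "\<forall>k<m. k \<noteq> i \<longrightarrow> (real m - 1) * hconj (p i) \<le> p k"
begin

definition "Q = {..<m} - {i}"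
definition "q = hconj (p i)"
definition "s = q * (real m - 1)"
definition "bexp l = (p l - 1) / s"
definition "adm x \<longleftrightarrow> (\<forall>l\<in>Q. (\<forall>j<d l. x l j > 0) \<and> pnorm (p l) (d l) (x l) = 1)"
definition "F x = grad m d f i x"
definition "Y x = psi q (F x)"
definition "XX x = x(i := Y x)"
definition "H x l = grad m d f l (XX x)"
definition "Z x = hgpm_z m d p f i x"
definition "amin x l = Min ((\<lambda>j. Z x l j / x l j) ` {..<d l})"
definition "amax x l = Max ((\<lambda>j. Z x l j / x l j) ` {..<d l})"
definition "lm x = (\<Prod>l\<in>Q. Min ((\<lambda>j. (Z x l j / x l j) powr bexp l) ` {..<d l}))"
definition "lp x = (\<Prod>l\<in>Q. Max ((\<lambda>j. (Z x l j / x l j) powr bexp l) ` {..<d l}))"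

lemma Q_iff: "l \<in> Q \<longleftrightarrow> l < m \<and> l \<noteq> i" by (auto simp: Q_def)
lemma finQ: "finite Q" by (simp add: Q_def)
lemma cardQ: "real (card Q) = real m - 1"
  using i m2 by (simp add: Q_def card_Diff_singleton of_nat_diff)
lemma pi1: "p i > 1" using prange i by auto
lemma pl1: "l < m \<Longrightarrow> p l > 1" using prange by auto
lemma q1: "q > 1" using pi1 by (simp add: q_def hconj_def field_simps)
lemma qm1: "q - 1 = 1 / (p i - 1)" using pi1 by (simp add: q_def hconj_m1)
lemma q_p: "(q - 1) * p i = q" using pi1 by (simp add: q_def hconj_def field_simps)
lemma inv_pq: "1 / p i + 1 / q = 1" using pi1 by (simp add: q_def hconj_def field_simps)
lemma s_pos: "s > 0" using q1 m2 by (simp add: s_def)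
lemma s_le: "l \<in> Q \<Longrightarrow> s \<le> p l" using icond by (auto simp: s_def Q_iff q_def algebra_simps)
lemma bexp_pos: "l \<in> Q \<Longrightarrow> bexp l > 0" using s_pos pl1 by (auto simp: bexp_def Q_iff)
lemma cardQ_s: "real (card Q) / s = 1 / q"
proof -
  have "s = q * real (card Q)" using cardQ by (simp add: s_def)
  moreover have "real (card Q) > 0" using cardQ m2 by simp
  ultimately show ?thesis using q1 by (simp add: field_simps)
qed
lemma dpos': "k < m \<Longrightarrow> 0 < d k" using dpos by (metis One_nat_def less_eq_Suc_le)

lemma grad_pos:
  assumes k: "k < m" and v: "\<And>l j. l < m \<Longrightarrow> l \<noteq> k \<Longrightarrow> j < d l \<Longrightarrow> v l j > 0" and j: "j < d k"
  shows "grad m d f k v j > 0"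
proof -
  define k' :: nat where "k' = (if k = 0 then 1 else 0)"
  have k': "k' < m" "k' \<noteq> k" using m2 k by (auto simp: k'_def)
  have "(k, j) \<in> Sigma {..<m} (\<lambda>k. {..<d k})" "(k', 0) \<in> Sigma {..<m} (\<lambda>k. {..<d k})"
    using k j k' dpos' by auto
  then have "((k, j), (k', 0)) \<in> (wi_edge m d f)\<^sup>*" using wirr unfolding weakly_irreducible_def by blast
  moreover have "(k, j) \<noteq> (k', 0)" using k' by auto
  ultimately obtain w where "((k, j), w) \<in> wi_edge m d f"
    by (metis converse_rtranclE)
  then obtain J where J: "J \<in> idx m d" "J k = j" "f J > 0" unfolding wi_edge_def by auto
  have vnn: "\<And>l j. l < m \<Longrightarrow> l \<noteq> k \<Longrightarrow> j < d l \<Longrightarrow> 0 \<le> v l j" by (meson v less_imp_le)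
  have nn: "\<And>J'. J' \<in> {J \<in> idx m d. J k = j} \<Longrightarrow> 0 \<le> f J' * (\<Prod>l\<in>{..<m} - {k}. v l (J' l))"
  proof -
    fix J' assume "J' \<in> {J \<in> idx m d. J k = j}"
    then have J': "J' \<in> idx m d" by simp
    have "0 \<le> (\<Prod>l\<in>{..<m} - {k}. v l (J' l))" by (rule prod_nonneg) (use vnn idx_lt[OF J'] in auto)
    then show "0 \<le> f J' * (\<Prod>l\<in>{..<m} - {k}. v l (J' l))" using fnonneg J' by simp
  qed
  have "0 < f J * (\<Prod>l\<in>{..<m} - {k}. v l (J l))"
    using J v idx_lt[OF J(1)] by (auto intro!: mult_pos_pos prod_pos)
  also have "\<dots> \<le> grad m d f k v j" unfolding grad_def
    by (rule member_le_sum) (use J nn finite_idx in auto)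
  finally show ?thesis .
qed

lemma adm_pos:
  assumes "adm x"
  shows F_pos: "\<And>j. j < d i \<Longrightarrow> F x j > 0"
    and Y_eq: "\<And>j. j < d i \<Longrightarrow> Y x j = F x j powr (q - 1)"
    and Y_pos: "\<And>j. j < d i \<Longrightarrow> Y x j > 0"
    and H_pos: "\<And>l j. l \<in> Q \<Longrightarrow> j < d l \<Longrightarrow> H x l j > 0"
    and Z_eq: "\<And>l j. l \<in> Q \<Longrightarrow> j < d l \<Longrightarrow> Z x l j = H x l j powr (1 / (p l - 1))"
    and Z_pos: "\<And>l j. l \<in> Q \<Longrightarrow> j < d l \<Longrightarrow> Z x l j > 0"
proof -
  have xp: "\<And>l j. l \<in> Q \<Longrightarrow> j < d l \<Longrightarrow> x l j > 0" using assms by (auto simp: adm_def)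
  show Fp: "\<And>j. j < d i \<Longrightarrow> F x j > 0" unfolding F_def
    by (rule grad_pos[OF i]) (use xp in \<open>auto simp: Q_iff\<close>)
  show Ye: "\<And>j. j < d i \<Longrightarrow> Y x j = F x j powr (q - 1)"
    using Fp by (simp add: Y_def psi_pos)
  show Yp: "\<And>j. j < d i \<Longrightarrow> Y x j > 0" using Fp Ye by (metis powr_gt_zero order_less_irrefl)
  show Hp: "\<And>l j. l \<in> Q \<Longrightarrow> j < d l \<Longrightarrow> H x l j > 0" unfolding H_def
    by (rule grad_pos) (use xp Yp in \<open>auto simp: Q_iff XX_def\<close>)
  show Ze: "\<And>l j. l \<in> Q \<Longrightarrow> j < d l \<Longrightarrow> Z x l j = H x l j powr (1 / (p l - 1))"
    using Hp pl1 by (auto simp: Z_def hgpm_z_def H_def XX_def Y_def F_def q_def Q_iff psi_pos hconj_m1)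
  show "\<And>l j. l \<in> Q \<Longrightarrow> j < d l \<Longrightarrow> Z x l j > 0" using Hp Ze by (metis powr_gt_zero order_less_irrefl)
qed

end



context hg begin

lemma adm_x_pos: "adm x \<Longrightarrow> l \<in> Q \<Longrightarrow> j < d l \<Longrightarrow> x l j > 0"
  by (auto simp: adm_def)

lemma ratio_pos: "adm x \<Longrightarrow> l \<in> Q \<Longrightarrow> j < d l \<Longrightarrow> Z x l j / x l j > 0"
  using Z_pos adm_x_pos by auto

lemma dQ: "l \<in> Q \<Longrightarrow> {..<d l} \<noteq> {}" using dpos' by (auto simp: Q_iff)

lemma lm_eq: "adm x \<Longrightarrow> lm x = (\<Prod>l\<in>Q. amin x l powr bexp l)"
  unfolding lm_def amin_def
  by (intro prod.cong refl Min_powr) (use ratio_pos dQ bexp_pos in \<open>auto intro: less_imp_le\<close>)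

lemma lp_eq: "adm x \<Longrightarrow> lp x = (\<Prod>l\<in>Q. amax x l powr bexp l)"
  unfolding lp_def amax_def
  by (intro prod.cong refl Max_powr) (use ratio_pos dQ bexp_pos in \<open>auto intro: less_imp_le\<close>)

lemma amin_pos: assumes "adm x" "l \<in> Q" shows "amin x l > 0"
proof -
  have "amin x l \<in> (\<lambda>j. Z x l j / x l j) ` {..<d l}" unfolding amin_def
    using dQ[OF assms(2)] by (intro Min_in) auto
  then show ?thesis using ratio_pos[OF assms] by auto
qed

lemma amax_pos: assumes "adm x" "l \<in> Q" shows "amax x l > 0"
proof -
  have "amax x l \<in> (\<lambda>j. Z x l j / x l j) ` {..<d l}" unfolding amax_def
    using dQ[OF assms(2)] by (intro Max_in) auto
  then show ?thesis using ratio_pos[OF assms] by auto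
qed

lemma amin_le: assumes "adm x" "l \<in> Q" "j < d l" shows "amin x l * x l j \<le> Z x l j"
proof -
  have "amin x l \<le> Z x l j / x l j" unfolding amin_def using assms(3) by (intro Min_le) auto
  then show ?thesis using adm_x_pos[OF assms] by (simp add: le_divide_eq)
qed

lemma amax_ge: assumes "adm x" "l \<in> Q" "j < d l" shows "Z x l j \<le> amax x l * x l j"
proof -
  have "Z x l j / x l j \<le> amax x l" unfolding amax_def using assms(3) by (intro Max_ge) auto
  then show ?thesis using adm_x_pos[OF assms] by (simp add: divide_le_eq)
qed

lemma H_eq: assumes "adm x" "l \<in> Q" "j < d l" shows "H x l j = Z x l j powr (p l - 1)"
proof -
  have "p l > 1" using assms(2) pl1 by (auto simp: Q_iff)
  then show ?thesis using Z_eq[OF assms] H_pos[OF assms] by (simp add: powr_powr)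
qed

definition "P x = (\<Sum>j<d i. F x j powr q)"

lemma F_Y: assumes "adm x" "j < d i" shows "Y x j * F x j = F x j powr q"
proof -
  have "F x j powr (q - 1) * F x j powr 1 = F x j powr q" unfolding powr_add[symmetric] by simp
  moreover have "\<bar>F x j\<bar> = F x j" using F_pos[OF assms] by simp
  ultimately show ?thesis using Y_eq[OF assms] by simp
qed

lemma grad_i_XX: "grad m d f i (XX x) = F x"
  by (simp add: XX_def F_def grad_upd)

lemma mf_XX: assumes "adm x" shows "multiform m d f (XX x) = P x"
proof -
  have "multiform m d f (XX x) = (\<Sum>j<d i. XX x i j * grad m d f i (XX x) j)" by (rule euler[OF i])
  also have "\<dots> = (\<Sum>j<d i. Y x j * F x j)" by (simp add: XX_def grad_upd F_def)
  also have "\<dots> = P x" unfolding P_def using F_Y[OF assms] by (intro sum.cong) auto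
  finally show ?thesis .
qed

lemma mf_XX_l: assumes "l \<in> Q" shows "multiform m d f (XX x) = (\<Sum>j<d l. x l j * H x l j)"
proof -
  have "l < m" "l \<noteq> i" using assms by (auto simp: Q_iff)
  then show ?thesis using euler[of l m d f "XX x"] by (simp add: H_def XX_def)
qed

lemma P_pos: assumes "adm x" shows "P x > 0"
proof -
  have "0 < F x 0 powr q" using F_pos[OF assms, of 0] dpos' i by simp
  also have "\<dots> \<le> P x" unfolding P_def
    by (rule member_le_sum) (use dpos' i in auto)
  finally show ?thesis .
qed

lemma sum_xp: assumes "adm x" "l \<in> Q" shows "(\<Sum>j<d l. x l j powr p l) = 1"
proof -
  have "l < m" using assms(2) by (simp add: Q_iff)
  then have "p l > 1" by (rule pl1)
  then have pp: "p l > 0" by simp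
  have "(\<Sum>j<d l. \<bar>x l j\<bar> powr p l) = 1"
    using assms pp by (intro pnorm_one) (auto simp: adm_def Q_iff)
  moreover have "(\<Sum>j<d l. \<bar>x l j\<bar> powr p l) = (\<Sum>j<d l. x l j powr p l)"
  proof (intro sum.cong refl)
    fix j assume "j \<in> {..<d l}"
    then have "x l j > 0" using adm_x_pos[OF assms] by simp
    then show "\<bar>x l j\<bar> powr p l = x l j powr p l" by simp
  qed
  ultimately show ?thesis by simp
qed

lemma amin_P: assumes "adm x" "l \<in> Q" shows "amin x l powr (p l - 1) \<le> P x"
proof -
  have pl: "p l > 1" using assms(2) pl1 by (auto simp: Q_iff)
  have "\<And>j. j < d l \<Longrightarrow> amin x l powr (p l - 1) * x l j powr p l \<le> x l j * H x l j"
  proof -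
    fix j assume j: "j < d l"
    have xp: "x l j > 0" using adm_x_pos[OF assms j] .
    have "(amin x l * x l j) powr (p l - 1) \<le> Z x l j powr (p l - 1)"
      using amin_le[OF assms j] amin_pos[OF assms] xp pl by (intro powr_mono2) auto
    then have "x l j * (amin x l * x l j) powr (p l - 1) \<le> x l j * H x l j"
      using H_eq[OF assms j] xp by simp
    moreover have "x l j * (amin x l * x l j) powr (p l - 1) = amin x l powr (p l - 1) * x l j powr p l"
    proof -
      have "x l j powr 1 * x l j powr (p l - 1) = x l j powr p l" unfolding powr_add[symmetric] by simp
      moreover have "\<bar>x l j\<bar> = x l j" using xp by simp
      ultimately show ?thesis using xp by (simp add: powr_mult)
    qed
    ultimately show "amin x l powr (p l - 1) * x l j powr p l \<le> x l j * H x l j" by simp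
  qed
  then have "(\<Sum>j<d l. amin x l powr (p l - 1) * x l j powr p l) \<le> (\<Sum>j<d l. x l j * H x l j)"
    by (intro sum_mono) auto
  also have "\<dots> = P x" using mf_XX_l[OF assms(2)] mf_XX[OF assms(1)] by simp
  finally show ?thesis using sum_xp[OF assms] by (simp add: sum_distrib_left[symmetric])
qed

lemma XX_nz: assumes "adm x" shows "\<forall>k<m. \<exists>j<d k. XX x k j \<noteq> 0"
proof (intro allI impI)
  fix k assume k: "k < m"
  show "\<exists>j<d k. XX x k j \<noteq> 0"
  proof (cases "k = i")
    case True
    then show ?thesis using Y_pos[OF assms, of 0] dpos' k by (intro exI[of _ 0]) (auto simp: XX_def)
  next
    case False
    then have "k \<in> Q" using k by (simp add: Q_iff)
    then show ?thesis using adm_x_pos[OF assms, of k 0] dpos' k False by (intro exI[of _ 0]) (auto simp: XX_def)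
  qed
qed

lemma P_tnorm: assumes "adm x" shows "P x powr (1/q) \<le> tnorm m d p f"
proof -
  have pp: "\<forall>k<m. p k > 0" using prange by auto
  have "(\<Prod>k<m. pnorm (p k) (d k) (XX x k)) = pnorm (p i) (d i) (XX x i) * (\<Prod>k\<in>Q. pnorm (p k) (d k) (XX x k))"
    unfolding Q_def using i by (subst prod.remove[of "{..<m}" i]) auto
  also have "(\<Prod>k\<in>Q. pnorm (p k) (d k) (XX x k)) = 1"
    using assms by (intro prod.neutral) (auto simp: adm_def XX_def Q_iff)
  also have "pnorm (p i) (d i) (XX x i) = P x powr (1 / p i)"
  proof -
    have "(\<Sum>j<d i. \<bar>Y x j\<bar> powr p i) = P x" unfolding P_def
    proof (intro sum.cong refl)
      fix j assume "j \<in> {..<d i}"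
      then show "\<bar>Y x j\<bar> powr p i = F x j powr q"
        using Y_eq[OF assms] Y_pos[OF assms] q_p by (simp add: powr_powr)
    qed
    then show ?thesis by (simp add: pnorm_def XX_def)
  qed
  finally have den: "(\<Prod>k<m. pnorm (p k) (d k) (XX x k)) = P x powr (1 / p i)" by simp
  have "1/q = 1 - 1 / p i" using inv_pq by linarith
  then have "P x powr (1/q) = P x powr (1 - 1 / p i)" by simp
  also have "\<dots> = P x / P x powr (1 / p i)" using P_pos[OF assms] by (simp add: powr_diff)
  also have "\<dots> = \<bar>multiform m d f (XX x)\<bar> / (\<Prod>k<m. pnorm (p k) (d k) (XX x k))"
    using den mf_XX[OF assms] P_pos[OF assms] by simp
  also have "\<dots> \<le> tnorm m d p f" by (rule tnorm_ge[OF pp XX_nz[OF assms]])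
  finally show ?thesis .
qed

lemma lower: assumes "adm x" shows "lm x \<le> tnorm m d p f"
proof -
  have "lm x = (\<Prod>l\<in>Q. amin x l powr bexp l)" by (rule lm_eq[OF assms])
  also have "\<dots> \<le> (\<Prod>l\<in>Q. P x powr (1/s))"
  proof (rule prod_mono)
    fix l assume l: "l \<in> Q"
    have "amin x l powr bexp l = (amin x l powr (p l - 1)) powr (1/s)"
      by (simp add: powr_powr bexp_def)
    also have "\<dots> \<le> P x powr (1/s)"
      using amin_P[OF assms l] s_pos by (intro powr_mono2) auto
    finally show "0 \<le> amin x l powr bexp l \<and> amin x l powr bexp l \<le> P x powr (1/s)" by simp
  qed
  also have "(\<Prod>l\<in>Q. P x powr (1/s)) = P x powr (\<Sum>l\<in>Q. 1/s)"
    by (rule powr_sum[symmetric]) (use P_pos[OF assms] in simp)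
  also have "(\<Sum>l\<in>Q. 1/s) = 1/q" using cardQ_s by simp
  finally show ?thesis using P_tnorm[OF assms] by simp
qed

end



context hg begin

lemma XX_i[simp]: "XX x i = Y x" by (simp add: XX_def)
lemma XX_l: "l \<noteq> i \<Longrightarrow> XX x l = x l" by (simp add: XX_def)

lemma XX_pos: assumes "adm x" "k < m" "j < d k" shows "XX x k j > 0"
proof (cases "k = i")
  case True then show ?thesis using Y_pos[OF assms(1)] assms by simp
next
  case False then show ?thesis using adm_x_pos[OF assms(1)] assms by (simp add: XX_l Q_iff)
qed

lemma theta_sum: "(\<Sum>k<m. (if k = i then 1 / p i else 1 / s)) = 1"
proof -
  have "(\<Sum>k<m. (if k = i then 1 / p i else 1 / s)) = 1 / p i + (\<Sum>k\<in>Q. (if k = i then 1 / p i else 1 / s))"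
    unfolding Q_def using i by (subst sum.remove[of "{..<m}" i]) auto
  also have "(\<Sum>k\<in>Q. (if k = i then 1 / p i else 1 / s)) = (\<Sum>k\<in>Q. 1 / s)"
    by (intro sum.cong refl) (auto simp: Q_iff)
  also have "\<dots> = real (card Q) / s" by simp
  finally show ?thesis using cardQ_s inv_pq by simp
qed

lemma upper_core:
  assumes adm: "adm x"
    and wnn: "\<And>k j. k < m \<Longrightarrow> j < d k \<Longrightarrow> w k j \<ge> 0"
    and wn: "\<And>k. k < m \<Longrightarrow> (\<Sum>j<d k. w k j powr p k) = 1"
  shows "multiform m d f w \<le> lp x"
proof -
  define R where "R l = amax x l" for l
  define \<Lambda> where "\<Lambda> = (\<Prod>l\<in>Q. R l powr bexp l)"
  have Rpos: "\<And>l. l \<in> Q \<Longrightarrow> R l > 0" using amax_pos[OF adm] by (simp add: R_def)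
  have lpL: "lp x = \<Lambda>" using lp_eq[OF adm] by (simp add: \<Lambda>_def R_def)
  have Lpos: "\<Lambda> > 0" unfolding \<Lambda>_def by (intro prod_pos) (metis Rpos powr_gt_zero order_less_irrefl)
  define \<theta> where "\<theta> k = (if k = i then 1 / p i else 1 / s)" for k
  define \<sigma> where "\<sigma> k = (if k = i then 1 else 1 / R k powr (p k - 1))" for k
  define c where "c J = f J * (\<Prod>k<m. XX x k (J k))" for J
  define a where "a J k = (if k = i then (w i (J i) / Y x (J i)) powr p i else (w k (J k) / x k (J k)) powr s)" for J k
  have th_nn: "\<And>k. \<theta> k \<ge> 0" using pi1 s_pos by (simp add: \<theta>_def)
  have sig_nn: "\<And>k. \<sigma> k \<ge> 0" by (simp add: \<sigma>_def)
  have a_nn: "\<And>J k. a J k \<ge> 0" by (simp add: a_def)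
  have c_nn: "c J \<ge> 0" if J: "J \<in> idx m d" for J
  proof -
    have "0 \<le> (\<Prod>k<m. XX x k (J k))"
      by (rule prod_nonneg) (use XX_pos[OF adm] idx_lt[OF J] in \<open>fastforce intro: less_imp_le\<close>)
    then show ?thesis unfolding c_def using fnonneg J by simp
  qed
  have claim1: "f J * (\<Prod>k<m. w k (J k)) \<le> \<Lambda> * (c J * (\<Sum>k<m. \<theta> k * (\<sigma> k * a J k)))"
    if J: "J \<in> idx m d" for J
  proof (cases "f J = 0")
    case True then show ?thesis by (simp add: c_def)
  next
    case False
    have Jlt: "\<And>k. k < m \<Longrightarrow> J k < d k" using idx_lt[OF J] .
    have AM: "(\<Prod>k<m. (\<sigma> k * a J k) powr \<theta> k) \<le> (\<Sum>k<m. \<theta> k * (\<sigma> k * a J k))"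
      by (rule wamgm) (use th_nn sig_nn a_nn theta_sum in \<open>auto simp: \<theta>_def\<close>)
    have per: "(\<sigma> k * a J k) powr \<theta> k = (w k (J k) / XX x k (J k)) / (if k = i then 1 else R k powr bexp k)"
      if k: "k < m" for k
    proof (cases "k = i")
      case True
      have w0: "w i (J i) \<ge> 0" using wnn Jlt i by simp
      have y0: "Y x (J i) > 0" using Y_pos[OF adm] Jlt i by simp
      show ?thesis using True pi1 w0 y0 by (simp add: \<sigma>_def a_def \<theta>_def powr_powr)
    next
      case False
      have kQ: "k \<in> Q" using k False by (simp add: Q_iff)
      define t where "t = w k (J k) / x k (J k)"
      have t0: "t \<ge> 0" unfolding t_def using wnn adm_x_pos[OF adm kQ] Jlt k by (simp add: less_imp_le)
      have e1: "(1 / R k powr (p k - 1)) powr (1 / s) = 1 / R k powr bexp k"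
        by (simp add: powr_divide powr_powr bexp_def)
      have e2: "(t powr s) powr (1 / s) = t" using t0 s_pos by (simp add: powr_powr)
      have sa: "\<sigma> k * a J k = (1 / R k powr (p k - 1)) * t powr s" by (simp add: \<sigma>_def a_def False t_def)
      have "(\<sigma> k * a J k) powr \<theta> k = (1 / R k powr (p k - 1)) powr (1/s) * (t powr s) powr (1/s)"
        unfolding sa using False by (simp only: \<theta>_def if_False powr_mult)
      also have "\<dots> = t / R k powr bexp k" using e1 e2 by simp
      finally show ?thesis using False by (simp add: XX_l t_def)
    qed
    have den: "(\<Prod>k<m. (if k = i then 1 else R k powr bexp k)) = \<Lambda>"
    proof -
      have "(\<Prod>k<m. (if k = i then 1 else R k powr bexp k)) = 1 * (\<Prod>k\<in>Q. (if k = i then 1 else R k powr bexp k))"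
        unfolding Q_def using i by (subst prod.remove[of "{..<m}" i]) auto
      also have "\<dots> = \<Lambda>" unfolding \<Lambda>_def mult_1 by (intro prod.cong refl) (auto simp: Q_iff)
      finally show ?thesis .
    qed
    have ident: "(\<Prod>k<m. (\<sigma> k * a J k) powr \<theta> k) = (\<Prod>k<m. w k (J k) / XX x k (J k)) / \<Lambda>"
    proof -
      have "(\<Prod>k<m. (\<sigma> k * a J k) powr \<theta> k) = (\<Prod>k<m. (w k (J k) / XX x k (J k)) / (if k = i then 1 else R k powr bexp k))"
        by (intro prod.cong refl) (rule per, simp)
      also have "\<dots> = (\<Prod>k<m. w k (J k) / XX x k (J k)) / (\<Prod>k<m. (if k = i then 1 else R k powr bexp k))"
        by (rule prod_dividef)
      finally show ?thesis using den by simp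
    qed
    have cw: "c J * (\<Prod>k<m. w k (J k) / XX x k (J k)) = f J * (\<Prod>k<m. w k (J k))"
    proof -
      have "(\<Prod>k<m. XX x k (J k)) * (\<Prod>k<m. w k (J k) / XX x k (J k)) = (\<Prod>k<m. XX x k (J k) * (w k (J k) / XX x k (J k)))"
        by (rule prod.distrib[symmetric])
      also have "\<dots> = (\<Prod>k<m. w k (J k))"
        using XX_pos[OF adm] Jlt by (intro prod.cong refl) (simp add: less_imp_neq[symmetric])
      finally show ?thesis by (simp add: c_def)
    qed
    have "f J * (\<Prod>k<m. w k (J k)) = \<Lambda> * (c J * (\<Prod>k<m. (\<sigma> k * a J k) powr \<theta> k))"
      using ident cw Lpos by simp
    also have "\<dots> \<le> \<Lambda> * (c J * (\<Sum>k<m. \<theta> k * (\<sigma> k * a J k)))"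
      using AM c_nn[OF J] Lpos by (intro mult_left_mono) auto
    finally show ?thesis .
  qed
  have claim2: "(\<Sum>J\<in>idx m d. c J * a J i) = 1"
  proof -
    have "(\<Sum>J\<in>idx m d. c J * a J i) = (\<Sum>J\<in>idx m d. f J * (\<Prod>k<m. XX x k (J k)) * (\<lambda>j. (w i j / Y x j) powr p i) (J i))"
      by (simp add: c_def a_def)
    also have "\<dots> = (\<Sum>j<d i. XX x i j * grad m d f i (XX x) j * (w i j / Y x j) powr p i)"
      by (rule euler_gen[OF i])
    also have "\<dots> = (\<Sum>j<d i. w i j powr p i)"
    proof (intro sum.cong refl)
      fix j assume "j \<in> {..<d i}"
      then have j: "j < d i" by simp
      have Yp: "Y x j powr p i = F x j powr q" using Y_eq[OF adm j] q_p by (simp add: powr_powr)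
      have Fp: "F x j powr q > 0" using F_pos[OF adm j] by simp
      show "XX x i j * grad m d f i (XX x) j * (w i j / Y x j) powr p i = w i j powr p i"
        using F_Y[OF adm j] Yp Fp by (simp add: grad_i_XX powr_divide)
    qed
    also have "\<dots> = 1" using wn i by simp
    finally show ?thesis .
  qed
  have claim3: "(\<Sum>J\<in>idx m d. c J * a J l) \<le> R l powr (p l - 1)" if l: "l \<in> Q" for l
  proof -
    have lm: "l < m" "l \<noteq> i" using l by (auto simp: Q_iff)
    have pl: "p l > 1" using pl1 lm by simp
    have "(\<Sum>J\<in>idx m d. c J * a J l) = (\<Sum>J\<in>idx m d. f J * (\<Prod>k<m. XX x k (J k)) * (\<lambda>j. (w l j / x l j) powr s) (J l))"
      using lm by (simp add: c_def a_def)
    also have "\<dots> = (\<Sum>j<d l. XX x l j * grad m d f l (XX x) j * (w l j / x l j) powr s)"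
      by (rule euler_gen[OF lm(1)])
    also have "\<dots> \<le> (\<Sum>j<d l. R l powr (p l - 1) * ((s / p l) * w l j powr p l + (1 - s / p l) * x l j powr p l))"
    proof (rule sum_mono)
      fix j assume "j \<in> {..<d l}"
      then have j: "j < d l" by simp
      have xp: "x l j > 0" using adm_x_pos[OF adm l j] .
      have wp: "w l j \<ge> 0" using wnn lm j by simp
      have "H x l j \<le> (R l * x l j) powr (p l - 1)"
        using H_eq[OF adm l j] amax_ge[OF adm l j] Z_pos[OF adm l j] pl
        by (simp add: R_def powr_mono2)
      then have Hle: "H x l j \<le> R l powr (p l - 1) * x l j powr (p l - 1)" by (simp add: powr_mult)
      have "x l j * H x l j * (w l j / x l j) powr s \<le> x l j * (R l powr (p l - 1) * x l j powr (p l - 1)) * (w l j / x l j) powr s"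
        using Hle xp by (intro mult_right_mono mult_left_mono) auto
      also have "\<dots> = R l powr (p l - 1) * (w l j powr s * x l j powr (p l - s))"
      proof -
        have "x l j powr 1 * x l j powr (p l - 1) = x l j powr (p l - s) * x l j powr s"
          unfolding powr_add[symmetric] by simp
        then have e: "x l j * x l j powr (p l - 1) = x l j powr (p l - s) * x l j powr s" using xp by simp
        have "x l j powr s > 0" using xp by simp
        then show ?thesis using e by (simp add: powr_divide field_simps)
      qed
      also have "\<dots> \<le> R l powr (p l - 1) * ((s / p l) * w l j powr p l + (1 - s / p l) * x l j powr p l)"
        using young2[OF wp xp s_pos s_le[OF l]] by (intro mult_left_mono) auto
      finally show "XX x l j * grad m d f l (XX x) j * (w l j / x l j) powr s \<le> R l powr (p l - 1) * ((s / p l) * w l j powr p l + (1 - s / p l) * x l j powr p l)"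
        using lm by (simp add: XX_l H_def)
    qed
    also have "\<dots> = R l powr (p l - 1) * ((s / p l) * (\<Sum>j<d l. w l j powr p l) + (1 - s / p l) * (\<Sum>j<d l. x l j powr p l))"
      by (simp only: sum_distrib_left[symmetric] sum.distrib)
    also have "\<dots> = R l powr (p l - 1)" using wn[OF lm(1)] sum_xp[OF adm l] by simp
    finally show ?thesis .
  qed
  have "multiform m d f w = (\<Sum>J\<in>idx m d. f J * (\<Prod>k<m. w k (J k)))" by (simp add: multiform_def)
  also have "\<dots> \<le> (\<Sum>J\<in>idx m d. \<Lambda> * (c J * (\<Sum>k<m. \<theta> k * (\<sigma> k * a J k))))"
    using claim1 by (intro sum_mono) auto
  also have "\<dots> = \<Lambda> * (\<Sum>k<m. \<theta> k * \<sigma> k * (\<Sum>J\<in>idx m d. c J * a J k))"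
    by (simp add: sum_distrib_left sum_distrib_right mult.assoc mult.left_commute sum.swap[of _ "idx m d"])
  also have "(\<Sum>k<m. \<theta> k * \<sigma> k * (\<Sum>J\<in>idx m d. c J * a J k))
      = \<theta> i * \<sigma> i * (\<Sum>J\<in>idx m d. c J * a J i) + (\<Sum>k\<in>Q. \<theta> k * \<sigma> k * (\<Sum>J\<in>idx m d. c J * a J k))"
    unfolding Q_def using i by (subst sum.remove[of "{..<m}" i]) auto
  also have "\<dots> \<le> 1 / p i + (\<Sum>k\<in>Q. 1 / s)"
  proof -
    have "(\<Sum>k\<in>Q. \<theta> k * \<sigma> k * (\<Sum>J\<in>idx m d. c J * a J k)) \<le> (\<Sum>k\<in>Q. 1 / s)"
    proof (rule sum_mono)
      fix k assume k: "k \<in> Q"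
      have ki: "k \<noteq> i" using k by (simp add: Q_iff)
      have Rp: "R k powr (p k - 1) > 0" using Rpos[OF k] by simp
      have "\<theta> k * \<sigma> k * (\<Sum>J\<in>idx m d. c J * a J k) \<le> \<theta> k * \<sigma> k * R k powr (p k - 1)"
        using claim3[OF k] th_nn sig_nn by (intro mult_left_mono) auto
      also have "\<dots> = 1 / s" using ki Rp by (simp add: \<theta>_def \<sigma>_def)
      finally show "\<theta> k * \<sigma> k * (\<Sum>J\<in>idx m d. c J * a J k) \<le> 1 / s" .
    qed
    then show ?thesis using claim2 by (simp add: \<theta>_def \<sigma>_def)
  qed
  also have "1 / p i + (\<Sum>k\<in>Q. 1 / s) = 1" using cardQ_s inv_pq by simp
  finally have "multiform m d f w \<le> \<Lambda> * 1" using Lpos by (simp add: mult_left_mono)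
  then show ?thesis using lpL by simp
qed

lemma upper: assumes adm: "adm x" shows "tnorm m d p f \<le> lp x"
proof (rule tnorm_le[OF dpos])
  fix u :: "nat \<Rightarrow> nat \<Rightarrow> real" assume u: "\<forall>k<m. \<exists>j<d k. u k j \<noteq> 0"
  define n where "n k = (if k < m then pnorm (p k) (d k) (u k) else 1)" for k
  have pp: "\<And>k. k < m \<Longrightarrow> p k > 0" using prange by auto
  have npos: "n k > 0" for k
  proof (cases "k < m")
    case True
    then obtain j where "j < d k" "u k j \<noteq> 0" using u by auto
    then show ?thesis using True pnorm_pos[OF pp[OF True]] by (simp add: n_def)
  qed (simp add: n_def)
  define w where "w k j = \<bar>u k j\<bar> / n k" for k j
  have wnn: "\<And>k j. k < m \<Longrightarrow> j < d k \<Longrightarrow> w k j \<ge> 0" using npos by (simp add: w_def less_imp_le)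
  have wn: "(\<Sum>j<d k. w k j powr p k) = 1" if k: "k < m" for k
  proof -
    have pa: "pnorm (p k) (d k) (\<lambda>j. \<bar>u k j\<bar>) = n k" using k by (simp add: n_def pnorm_def)
    have "pnorm (p k) (d k) (\<lambda>j. \<bar>u k j\<bar> / pnorm (p k) (d k) (\<lambda>j. \<bar>u k j\<bar>)) = 1"
      using pp[OF k] npos[of k] pa by (intro pnorm_normalize) auto
    then have "pnorm (p k) (d k) (w k) = 1" using pa by (simp add: w_def[abs_def])
    then have "(\<Sum>j<d k. \<bar>w k j\<bar> powr p k) = 1" by (rule pnorm_one[OF pp[OF k]])
    moreover have "(\<Sum>j<d k. \<bar>w k j\<bar> powr p k) = (\<Sum>j<d k. w k j powr p k)"
      using wnn k by (intro sum.cong refl) simp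
    ultimately show ?thesis by simp
  qed
  have "(\<lambda>k j. \<bar>u k j\<bar>) = (\<lambda>k j. n k * w k j)" using npos by (auto simp: w_def fun_eq_iff) (metis less_irrefl)
  then have "multiform m d f (\<lambda>k j. \<bar>u k j\<bar>) = (\<Prod>k<m. n k) * multiform m d f w"
    by (simp add: multiform_scale)
  also have "\<dots> \<le> (\<Prod>k<m. n k) * lp x"
    using upper_core[OF adm wnn wn] npos by (intro mult_left_mono prod_nonneg) (auto intro: less_imp_le)
  finally have "\<bar>multiform m d f u\<bar> \<le> (\<Prod>k<m. n k) * lp x"
    using multiform_abs[OF fnonneg, of u] by linarith
  moreover have "(\<Prod>k<m. n k) = (\<Prod>k<m. pnorm (p k) (d k) (u k))" by (simp add: n_def)
  moreover have "(\<Prod>k<m. n k) > 0" using npos by (simp add: prod_pos)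
  ultimately show "\<bar>multiform m d f u\<bar> / (\<Prod>k<m. pnorm (p k) (d k) (u k)) \<le> lp x"
    by (simp add: divide_le_eq mult.commute)
qed

end



context hg begin

abbreviation "NX x \<equiv> hgpm_next m d p f i x"
definition "nz x l = pnorm (p l) (d l) (Z x l)"

lemma next_l: "l \<noteq> i \<Longrightarrow> NX x l = (\<lambda>j. Z x l j / nz x l)"
  by (simp add: hgpm_next_def Z_def Let_def nz_def)

lemma nz_pos: assumes "adm x" "l \<in> Q" shows "nz x l > 0"
proof -
  have "l < m" using assms(2) by (simp add: Q_iff)
  then have "p l > 0" "0 < d l" using pl1 dpos' by force+
  then show ?thesis unfolding nz_def using Z_pos[OF assms, of 0] by (intro pnorm_pos) auto
qed

lemma adm_next: assumes "adm x" shows "adm (NX x)"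
  unfolding adm_def
proof
  fix l assume l: "l \<in> Q"
  have li: "l \<noteq> i" "l < m" using l by (auto simp: Q_iff)
  have "p l > 0" using pl1 li by force
  show "(\<forall>j<d l. 0 < NX x l j) \<and> pnorm (p l) (d l) (NX x l) = 1"
    using Z_pos[OF assms l] nz_pos[OF assms l] pnorm_normalize[OF \<open>p l > 0\<close>, of "d l" "Z x l"]
    by (simp add: next_l[OF li(1)] nz_def)
qed

lemma n_ge_amin: assumes "adm x" "l \<in> Q" shows "amin x l \<le> nz x l"
proof -
  have "l < m" using assms(2) by (simp add: Q_iff)
  then have pl: "p l > 0" using pl1 by force
  have "amin x l = amin x l * pnorm (p l) (d l) (x l)" using assms by (simp add: adm_def)
  also have "\<dots> = pnorm (p l) (d l) (\<lambda>j. amin x l * x l j)"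
    using pnorm_scale[OF pl, of "amin x l"] amin_pos[OF assms] by simp
  also have "\<dots> \<le> nz x l" unfolding nz_def
  proof (rule pnorm_mono[OF pl])
    fix j assume j: "j < d l"
    show "\<bar>amin x l * x l j\<bar> \<le> \<bar>Z x l j\<bar>"
      using amin_le[OF assms j] amin_pos[OF assms] adm_x_pos[OF assms j] by simp
  qed
  finally show ?thesis .
qed

lemma n_le_amax: assumes "adm x" "l \<in> Q" shows "nz x l \<le> amax x l"
proof -
  have "l < m" using assms(2) by (simp add: Q_iff)
  then have pl: "p l > 0" using pl1 by force
  have "nz x l \<le> pnorm (p l) (d l) (\<lambda>j. amax x l * x l j)" unfolding nz_def
  proof (rule pnorm_mono[OF pl])
    fix j assume j: "j < d l"
    show "\<bar>Z x l j\<bar> \<le> \<bar>amax x l * x l j\<bar>"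
      using amax_ge[OF assms j] Z_pos[OF assms j] by simp
  qed
  also have "\<dots> = amax x l * pnorm (p l) (d l) (x l)"
    using pnorm_scale[OF pl, of "amax x l"] amax_pos[OF assms] by simp
  also have "\<dots> = amax x l" using assms by (simp add: adm_def)
  finally show ?thesis .
qed

lemma coef_eq:
  assumes cpos: "\<And>l. l \<in> Q \<Longrightarrow> c l > 0" and l: "l \<in> Q"
  shows "(\<Prod>k\<in>{..<m} - {l}. (c(i := (\<Prod>k\<in>Q. c k) powr (q - 1))) k) = (\<Prod>k\<in>Q. c k) powr q / c l"
proof -
  define C where "C = (\<Prod>k\<in>Q. c k)"
  have Cpos: "C > 0" unfolding C_def using cpos by (intro prod_pos) auto
  have li: "l \<noteq> i" using l by (simp add: Q_iff)
  have set: "{..<m} - {l} = insert i (Q - {l})" using i li by (auto simp: Q_def)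
  have "(\<Prod>k\<in>{..<m} - {l}. (c(i := C powr (q - 1))) k) = C powr (q - 1) * (\<Prod>k\<in>Q - {l}. (c(i := C powr (q - 1))) k)"
    unfolding set by (subst prod.insert) (auto simp: Q_def)
  also have "(\<Prod>k\<in>Q - {l}. (c(i := C powr (q - 1))) k) = (\<Prod>k\<in>Q - {l}. c k)"
    by (intro prod.cong refl) (auto simp: Q_def)
  also have "(\<Prod>k\<in>Q - {l}. c k) = C / c l"
    using prod.remove[OF finQ l, of c] cpos[OF l] by (simp add: C_def)
  also have "C powr (q - 1) * (C / c l) = (C powr (q - 1) * C powr 1) / c l" using Cpos by simp
  also have "C powr (q - 1) * C powr 1 = C powr q" unfolding powr_add[symmetric] by simp
  finally show ?thesis by (simp add: C_def)
qed

lemma step_ge: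
  assumes adm: "adm x" and cpos: "\<And>l. l \<in> Q \<Longrightarrow> c l > 0"
    and le: "\<And>l j. l \<in> Q \<Longrightarrow> j < d l \<Longrightarrow> c l * x l j \<le> NX x l j"
    and l: "l \<in> Q" and j: "j < d l"
  shows "nz x l * ((\<Prod>k\<in>Q. c k) powr q / c l) powr (1 / (p l - 1)) \<le> Z (NX x) l j / NX x l j"
proof -
  define C where "C = (\<Prod>k\<in>Q. c k)"
  have Cpos: "C > 0" unfolding C_def using cpos by (intro prod_pos) auto
  have adm': "adm (NX x)" by (rule adm_next[OF adm])
  have Fge: "C * F x j' \<le> F (NX x) j'" for j'
    unfolding F_def C_def Q_def
    by (rule grad_scale_le[OF fnonneg]) (use adm_x_pos[OF adm] cpos le in \<open>auto simp: Q_iff intro: less_imp_le\<close>)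
  have Yge: "C powr (q - 1) * Y x j' \<le> Y (NX x) j'" if j': "j' < d i" for j'
  proof -
    have "C powr (q - 1) * Y x j' = (C * F x j') powr (q - 1)"
      using Y_eq[OF adm j'] by (simp add: powr_mult)
    also have "\<dots> \<le> F (NX x) j' powr (q - 1)"
      using Fge[of j'] Cpos F_pos[OF adm j'] q1 by (intro powr_mono2) auto
    also have "\<dots> = Y (NX x) j'" using Y_eq[OF adm' j'] by simp
    finally show ?thesis .
  qed
  have lm: "l < m" "l \<noteq> i" using l by (auto simp: Q_iff)
  have Hge: "(C powr q / c l) * H x l j \<le> H (NX x) l j"
  proof -
    have "(\<Prod>k\<in>{..<m} - {l}. (c(i := C powr (q - 1))) k) * grad m d f l (XX x) j \<le> grad m d f l (XX (NX x)) j"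
    proof (rule grad_scale_le[OF fnonneg])
      fix k j' assume k: "k < m" "k \<noteq> l" "j' < d k"
      show "0 \<le> XX x k j' \<and> 0 \<le> (c(i := C powr (q - 1))) k \<and> (c(i := C powr (q - 1))) k * XX x k j' \<le> XX (NX x) k j'"
      proof (cases "k = i")
        case True
        then show ?thesis using Yge[of j'] Y_pos[OF adm, of j'] k by (simp add: less_imp_le)
      next
        case False
        then have "k \<in> Q" using k by (simp add: Q_iff)
        then show ?thesis using False le[of k j'] cpos[of k] adm_x_pos[OF adm, of k j'] k
          by (simp add: XX_l less_imp_le)
      qed
    qed
    then show ?thesis using coef_eq[OF cpos l] by (simp add: H_def C_def)
  qed
  have pl: "p l > 1" using pl1 lm by simp
  have Zge: "(C powr q / c l) powr (1 / (p l - 1)) * Z x l j \<le> Z (NX x) l j"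
  proof -
    have "(C powr q / c l) powr (1 / (p l - 1)) * Z x l j = ((C powr q / c l) * H x l j) powr (1 / (p l - 1))"
      by (simp only: Z_eq[OF adm l j] powr_mult)
    also have "\<dots> \<le> H (NX x) l j powr (1 / (p l - 1))"
      using Hge Cpos cpos[OF l] H_pos[OF adm l j] pl by (intro powr_mono2) auto
    also have "\<dots> = Z (NX x) l j" using Z_eq[OF adm' l j] by simp
    finally show ?thesis .
  qed
  have x': "NX x l j = Z x l j / nz x l" using next_l[OF lm(2)] by simp
  have "nz x l * (C powr q / c l) powr (1 / (p l - 1)) = ((C powr q / c l) powr (1 / (p l - 1)) * Z x l j) / (Z x l j / nz x l)"
    using Z_pos[OF adm l j] nz_pos[OF adm l] by (simp add: field_simps)
  also have "\<dots> \<le> Z (NX x) l j / (Z x l j / nz x l)"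
    using Zge Z_pos[OF adm l j] nz_pos[OF adm l] by (intro divide_right_mono) auto
  finally show ?thesis using x' by (simp add: C_def)
qed

lemma step_le:
  assumes adm: "adm x" and cpos: "\<And>l. l \<in> Q \<Longrightarrow> c l > 0"
    and le: "\<And>l j. l \<in> Q \<Longrightarrow> j < d l \<Longrightarrow> NX x l j \<le> c l * x l j"
    and l: "l \<in> Q" and j: "j < d l"
  shows "Z (NX x) l j / NX x l j \<le> nz x l * ((\<Prod>k\<in>Q. c k) powr q / c l) powr (1 / (p l - 1))"
proof -
  define C where "C = (\<Prod>k\<in>Q. c k)"
  have Cpos: "C > 0" unfolding C_def using cpos by (intro prod_pos) auto
  have adm': "adm (NX x)" by (rule adm_next[OF adm])
  have Fle: "F (NX x) j' \<le> C * F x j'" for j'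
    unfolding F_def C_def Q_def
    by (rule grad_scale_ge[OF fnonneg]) (use adm_x_pos[OF adm'] le in \<open>auto simp: Q_iff intro: less_imp_le\<close>)
  have Yle: "Y (NX x) j' \<le> C powr (q - 1) * Y x j'" if j': "j' < d i" for j'
  proof -
    have "Y (NX x) j' = F (NX x) j' powr (q - 1)" using Y_eq[OF adm' j'] by simp
    also have "\<dots> \<le> (C * F x j') powr (q - 1)"
      using Fle[of j'] F_pos[OF adm' j'] q1 by (intro powr_mono2) auto
    also have "\<dots> = C powr (q - 1) * Y x j'"
      using Y_eq[OF adm j'] by (simp add: powr_mult)
    finally show ?thesis .
  qed
  have lm: "l < m" "l \<noteq> i" using l by (auto simp: Q_iff)
  have Hle: "H (NX x) l j \<le> (C powr q / c l) * H x l j"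
  proof -
    have "grad m d f l (XX (NX x)) j \<le> (\<Prod>k\<in>{..<m} - {l}. (c(i := C powr (q - 1))) k) * grad m d f l (XX x) j"
    proof (rule grad_scale_ge[OF fnonneg])
      fix k j' assume k: "k < m" "k \<noteq> l" "j' < d k"
      show "0 \<le> XX (NX x) k j' \<and> XX (NX x) k j' \<le> (c(i := C powr (q - 1))) k * XX x k j'"
      proof (cases "k = i")
        case True
        then show ?thesis using Yle[of j'] Y_pos[OF adm', of j'] k by (simp add: less_imp_le)
      next
        case False
        then have "k \<in> Q" using k by (simp add: Q_iff)
        then show ?thesis using False le[of k j'] adm_x_pos[OF adm', of k j'] k
          by (simp add: XX_l less_imp_le)
      qed
    qed
    then show ?thesis using coef_eq[OF cpos l] by (simp add: H_def C_def)
  qed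
  have pl: "p l > 1" using pl1 lm by simp
  have Zle: "Z (NX x) l j \<le> (C powr q / c l) powr (1 / (p l - 1)) * Z x l j"
  proof -
    have "Z (NX x) l j = H (NX x) l j powr (1 / (p l - 1))" using Z_eq[OF adm' l j] by simp
    also have "\<dots> \<le> ((C powr q / c l) * H x l j) powr (1 / (p l - 1))"
      using Hle H_pos[OF adm' l j] pl by (intro powr_mono2) auto
    also have "\<dots> = (C powr q / c l) powr (1 / (p l - 1)) * Z x l j"
      by (simp only: Z_eq[OF adm l j] powr_mult)
    finally show ?thesis .
  qed
  have x': "NX x l j = Z x l j / nz x l" using next_l[OF lm(2)] by simp
  have "Z (NX x) l j / (Z x l j / nz x l) \<le> ((C powr q / c l) powr (1 / (p l - 1)) * Z x l j) / (Z x l j / nz x l)"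
    using Zle Z_pos[OF adm l j] nz_pos[OF adm l] by (intro divide_right_mono) auto
  also have "\<dots> = nz x l * (C powr q / c l) powr (1 / (p l - 1))"
    using Z_pos[OF adm l j] nz_pos[OF adm l] by (simp add: field_simps)
  finally show ?thesis using x' by (simp add: C_def)
qed

end



context hg begin

lemma bexp_ge: assumes "l \<in> Q" shows "1 - 1 / s \<le> bexp l"
proof -
  have "s - 1 \<le> p l - 1" using s_le[OF assms] by simp
  then have "(s - 1) / s \<le> (p l - 1) / s" using s_pos by (intro divide_right_mono) auto
  moreover have "(s - 1) / s = 1 - 1 / s" using s_pos by (simp add: field_simps)
  ultimately show ?thesis by (simp add: bexp_def)
qed

lemma prod_beta:
  assumes cpos: "\<And>l. l \<in> Q \<Longrightarrow> c l > 0" and npos: "\<And>l. l \<in> Q \<Longrightarrow> n l > 0"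
  shows "(\<Prod>l\<in>Q. (n l * ((\<Prod>k\<in>Q. c k) powr q / c l) powr (1 / (p l - 1))) powr bexp l)
       = (\<Prod>l\<in>Q. n l powr bexp l * c l powr (1 - 1 / s))"
proof -
  define C where "C = (\<Prod>k\<in>Q. c k)"
  have Cpos: "C > 0" unfolding C_def using cpos by (intro prod_pos) auto
  have per: "(n l * (C powr q / c l) powr (1 / (p l - 1))) powr bexp l
      = n l powr bexp l * C powr (q / s) / c l powr (1 / s)" if l: "l \<in> Q" for l
  proof -
    have pl: "p l > 1" using pl1 l by (auto simp: Q_iff)
    have e: "1 / (p l - 1) * bexp l = 1 / s" using pl s_pos by (simp add: bexp_def field_simps)
    have "(n l * (C powr q / c l) powr (1 / (p l - 1))) powr bexp l
        = n l powr bexp l * (C powr q / c l) powr (1 / (p l - 1) * bexp l)"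
      by (simp only: powr_mult powr_powr)
    also have "\<dots> = n l powr bexp l * (C powr q / c l) powr (1 / s)" by (simp only: e)
    also have "(C powr q / c l) powr (1 / s) = C powr (q / s) / c l powr (1 / s)"
      by (simp add: powr_divide powr_powr)
    finally show ?thesis by simp
  qed
  have "(\<Prod>l\<in>Q. (n l * (C powr q / c l) powr (1 / (p l - 1))) powr bexp l)
      = (\<Prod>l\<in>Q. n l powr bexp l * C powr (q / s) / c l powr (1 / s))"
    using per by (intro prod.cong refl) auto
  also have "\<dots> = (\<Prod>l\<in>Q. n l powr bexp l) * (\<Prod>l\<in>Q. C powr (q / s)) / (\<Prod>l\<in>Q. c l powr (1 / s))"
    by (simp add: prod.distrib prod_dividef)
  also have "(\<Prod>l\<in>Q. C powr (q / s)) = C"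
  proof -
    have "(\<Prod>l\<in>Q. C powr (q / s)) = C powr (\<Sum>l\<in>Q. q / s)"
      by (rule powr_sum[symmetric]) (use Cpos in simp)
    also have "(\<Sum>l\<in>Q. q / s) = q * (real (card Q) / s)" by simp
    also have "\<dots> = 1" using cardQ_s q1 by simp
    finally show ?thesis using Cpos by simp
  qed
  also have "(\<Prod>l\<in>Q. n l powr bexp l * c l powr (1 - 1 / s)) = (\<Prod>l\<in>Q. n l powr bexp l) * (C / (\<Prod>l\<in>Q. c l powr (1 / s)))"
  proof -
    have "(\<Prod>l\<in>Q. n l powr bexp l * c l powr (1 - 1 / s)) = (\<Prod>l\<in>Q. n l powr bexp l * (c l / c l powr (1 / s)))"
    proof (intro prod.cong refl)
      fix l assume "l \<in> Q"
      then have "c l > 0" by (rule cpos)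
      then show "n l powr bexp l * c l powr (1 - 1 / s) = n l powr bexp l * (c l / c l powr (1 / s))"
        by (simp add: powr_diff)
    qed
    also have "\<dots> = (\<Prod>l\<in>Q. n l powr bexp l) * (C / (\<Prod>l\<in>Q. c l powr (1 / s)))"
      by (simp add: prod.distrib prod_dividef C_def)
    finally show ?thesis .
  qed
  ultimately show ?thesis by (simp add: C_def)
qed

lemma lm_mono: assumes adm: "adm x" shows "lm x \<le> lm (NX x)"
proof -
  define c where "c l = amin x l / nz x l" for l
  define C where "C = (\<Prod>k\<in>Q. c k)"
  define \<beta> where "\<beta> l = nz x l * (C powr q / c l) powr (1 / (p l - 1))" for l
  have adm': "adm (NX x)" by (rule adm_next[OF adm])
  have cpos: "\<And>l. l \<in> Q \<Longrightarrow> c l > 0" using amin_pos[OF adm] nz_pos[OF adm] by (simp add: c_def)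
  have c1: "\<And>l. l \<in> Q \<Longrightarrow> c l \<le> 1" using n_ge_amin[OF adm] nz_pos[OF adm] by (simp add: c_def)
  have le: "c l * x l j \<le> NX x l j" if l: "l \<in> Q" and j: "j < d l" for l j
  proof -
    have li: "l \<noteq> i" using l by (simp add: Q_iff)
    have "c l * x l j = (amin x l * x l j) / nz x l" by (simp add: c_def)
    also have "\<dots> \<le> Z x l j / nz x l" using amin_le[OF adm l j] nz_pos[OF adm l] by (intro divide_right_mono) auto
    finally show ?thesis using next_l[OF li] by simp
  qed
  have bmin: "\<beta> l \<le> amin (NX x) l" if l: "l \<in> Q" for l
    unfolding amin_def
  proof (rule Min.boundedI)
    show "finite ((\<lambda>j. Z (NX x) l j / NX x l j) ` {..<d l})" by simp
    show "(\<lambda>j. Z (NX x) l j / NX x l j) ` {..<d l} \<noteq> {}" using dQ[OF l] by simp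
    fix t assume "t \<in> (\<lambda>j. Z (NX x) l j / NX x l j) ` {..<d l}"
    then obtain j where j: "j < d l" "t = Z (NX x) l j / NX x l j" by auto
    show "\<beta> l \<le> t" using step_ge[OF adm cpos le l j(1)] j by (simp add: \<beta>_def C_def)
  qed
  have bpos: "\<beta> l \<ge> 0" if "l \<in> Q" for l using nz_pos[OF adm that] by (simp add: \<beta>_def)
  have "lm x = (\<Prod>l\<in>Q. amin x l powr bexp l)" by (rule lm_eq[OF adm])
  also have "\<dots> \<le> (\<Prod>l\<in>Q. nz x l powr bexp l * c l powr (1 - 1 / s))"
  proof (rule prod_mono)
    fix l assume l: "l \<in> Q"
    have a: "amin x l = nz x l * c l" using nz_pos[OF adm l] by (simp add: c_def)
    have "c l powr bexp l \<le> c l powr (1 - 1 / s)"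
      using powr_mono'[OF bexp_ge[OF l], of "c l"] cpos[OF l] c1[OF l] by simp
    then have "nz x l powr bexp l * c l powr bexp l \<le> nz x l powr bexp l * c l powr (1 - 1 / s)"
      by (intro mult_left_mono) auto
    then show "0 \<le> amin x l powr bexp l \<and> amin x l powr bexp l \<le> nz x l powr bexp l * c l powr (1 - 1 / s)"
      unfolding a by (simp add: powr_mult)
  qed
  also have "\<dots> = (\<Prod>l\<in>Q. \<beta> l powr bexp l)"
    unfolding \<beta>_def C_def by (rule prod_beta[symmetric]) (use cpos nz_pos[OF adm] in auto)
  also have "\<dots> \<le> (\<Prod>l\<in>Q. amin (NX x) l powr bexp l)"
  proof (rule prod_mono)
    fix l assume l: "l \<in> Q"
    show "0 \<le> \<beta> l powr bexp l \<and> \<beta> l powr bexp l \<le> amin (NX x) l powr bexp l"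
      using powr_mono2[OF less_imp_le[OF bexp_pos[OF l]] bpos[OF l] bmin[OF l]] by simp
  qed
  also have "\<dots> = lm (NX x)" by (rule lm_eq[OF adm', symmetric])
  finally show ?thesis .
qed

lemma lp_mono: assumes adm: "adm x" shows "lp (NX x) \<le> lp x"
proof -
  define c where "c l = amax x l / nz x l" for l
  define C where "C = (\<Prod>k\<in>Q. c k)"
  define \<beta> where "\<beta> l = nz x l * (C powr q / c l) powr (1 / (p l - 1))" for l
  have adm': "adm (NX x)" by (rule adm_next[OF adm])
  have cpos: "\<And>l. l \<in> Q \<Longrightarrow> c l > 0" using amax_pos[OF adm] nz_pos[OF adm] by (simp add: c_def)
  have c1: "\<And>l. l \<in> Q \<Longrightarrow> 1 \<le> c l" using n_le_amax[OF adm] nz_pos[OF adm] by (simp add: c_def)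
  have le: "NX x l j \<le> c l * x l j" if l: "l \<in> Q" and j: "j < d l" for l j
  proof -
    have li: "l \<noteq> i" using l by (simp add: Q_iff)
    have "Z x l j / nz x l \<le> (amax x l * x l j) / nz x l" using amax_ge[OF adm l j] nz_pos[OF adm l] by (intro divide_right_mono) auto
    also have "\<dots> = c l * x l j" by (simp add: c_def)
    finally show ?thesis using next_l[OF li] by simp
  qed
  have bmax: "amax (NX x) l \<le> \<beta> l" if l: "l \<in> Q" for l
    unfolding amax_def
  proof (rule Max.boundedI)
    show "finite ((\<lambda>j. Z (NX x) l j / NX x l j) ` {..<d l})" by simp
    show "(\<lambda>j. Z (NX x) l j / NX x l j) ` {..<d l} \<noteq> {}" using dQ[OF l] by simp
    fix t assume "t \<in> (\<lambda>j. Z (NX x) l j / NX x l j) ` {..<d l}"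
    then obtain j where j: "j < d l" "t = Z (NX x) l j / NX x l j" by auto
    show "t \<le> \<beta> l" using step_le[OF adm cpos le l j(1)] j by (simp add: \<beta>_def C_def)
  qed
  have "lp (NX x) = (\<Prod>l\<in>Q. amax (NX x) l powr bexp l)" by (rule lp_eq[OF adm'])
  also have "\<dots> \<le> (\<Prod>l\<in>Q. \<beta> l powr bexp l)"
  proof (rule prod_mono)
    fix l assume l: "l \<in> Q"
    show "0 \<le> amax (NX x) l powr bexp l \<and> amax (NX x) l powr bexp l \<le> \<beta> l powr bexp l"
      using powr_mono2[OF less_imp_le[OF bexp_pos[OF l]] less_imp_le[OF amax_pos[OF adm' l]] bmax[OF l]] by simp
  qed
  also have "\<dots> = (\<Prod>l\<in>Q. nz x l powr bexp l * c l powr (1 - 1 / s))"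
    unfolding \<beta>_def C_def by (rule prod_beta) (use cpos nz_pos[OF adm] in auto)
  also have "\<dots> \<le> (\<Prod>l\<in>Q. amax x l powr bexp l)"
  proof (rule prod_mono)
    fix l assume l: "l \<in> Q"
    have a: "amax x l = nz x l * c l" using nz_pos[OF adm l] by (simp add: c_def)
    have "c l powr (1 - 1 / s) \<le> c l powr bexp l"
      using powr_mono[OF bexp_ge[OF l] c1[OF l]] by simp
    then have "nz x l powr bexp l * c l powr (1 - 1 / s) \<le> nz x l powr bexp l * c l powr bexp l"
      by (intro mult_left_mono) auto
    then show "0 \<le> nz x l powr bexp l * c l powr (1 - 1 / s) \<and> nz x l powr bexp l * c l powr (1 - 1 / s) \<le> amax x l powr bexp l"
      unfolding a by (simp add: powr_mult)
  qed
  also have "\<dots> = lp x" by (rule lp_eq[OF adm, symmetric])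
  finally show ?thesis .
qed

end


lemma mid_lemma:
  fixes a b t e :: real
  assumes "a \<le> t" "t \<le> b" "b - a < e"
  shows "\<bar>(a + b) / 2 - t\<bar> < e"
  using assms by (simp add: abs_less_iff field_simps)

theorem proposition5:
  fixes m :: nat and d :: "nat \<Rightarrow> nat" and p :: "nat \<Rightarrow> real"
    and f :: "(nat \<Rightarrow> nat) \<Rightarrow> real" and i :: nat
    and x0 :: "nat \<Rightarrow> nat \<Rightarrow> real" and \<epsilon> :: real
  assumes m2: "m \<ge> 2"
    and dpos: "\<forall>k<m. d k \<ge> 1"
    and fnonneg: "\<forall>J\<in>idx m d. f J \<ge> 0"
    and wirr: "weakly_irreducible m d f"
    and prange: "\<forall>k<m. 1 < p k"
    and i: "i < m"
    and icond: "\<forall>k<m. k \<noteq> i \<longrightarrow> (real m - 1) * hconj (p i) \<le> p k"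
    and icond2: "m = 2 \<longrightarrow> (\<forall>k<m. k \<noteq> i \<longrightarrow> p i \<le> p k)"
    and eps: "\<epsilon> > 0"
    and x0pos: "\<forall>l<m. l \<noteq> i \<longrightarrow> (\<forall>j<d l. x0 l j > 0)"
    and x0norm: "\<forall>l<m. l \<noteq> i \<longrightarrow> pnorm (p l) (d l) (x0 l) = 1"
  shows "(\<forall>k\<ge>1.
            hgpm_lam_minus m d p f i x0 k \<le> hgpm_lam_minus m d p f i x0 (k + 1) \<and>
            hgpm_lam_minus m d p f i x0 (k + 1) \<le> tnorm m d p f \<and>
            tnorm m d p f \<le> hgpm_lam_plus m d p f i x0 (k + 1) \<and>
            hgpm_lam_plus m d p f i x0 (k + 1) \<le> hgpm_lam_plus m d p f i x0 k)
       \<and> (\<forall>k\<ge>1. hgpm_lam_plus m d p f i x0 k - hgpm_lam_minus m d p f i x0 k < \<epsilon> \<and>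
             (\<forall>k'\<in>{1..<k}. \<not> (hgpm_lam_plus m d p f i x0 k' - hgpm_lam_minus m d p f i x0 k' < \<epsilon>))
           \<longrightarrow> \<bar>(hgpm_lam_minus m d p f i x0 k + hgpm_lam_plus m d p f i x0 k) / 2 - tnorm m d p f\<bar> < \<epsilon>)"
  proof -
  interpret H: hg m d p f i
    using m2 dpos fnonneg wirr prange i icond by unfold_locales auto
  define xs where "xs k = hgpm_x m d p f i x0 k" for k
  have xs_Suc: "xs (Suc k) = H.NX (xs k)" for k by (simp add: xs_def hgpm_x_def)
  have adm0: "H.adm x0" using x0pos x0norm by (auto simp: H.adm_def H.Q_iff)
  have adm: "H.adm (xs k)" for k
  proof (induction k)
    case 0 then show ?case using adm0 by (simp add: xs_def hgpm_x_def)
  next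
    case (Suc k) then show ?case using H.adm_next by (simp add: xs_Suc)
  qed
  have lmeq: "hgpm_lam_minus m d p f i x0 k = H.lm (xs (k - 1))" for k
    by (simp add: hgpm_lam_minus_def H.lm_def Let_def H.Z_def H.bexp_def H.s_def H.q_def H.Q_def xs_def)
  have lpeq: "hgpm_lam_plus m d p f i x0 k = H.lp (xs (k - 1))" for k
    by (simp add: hgpm_lam_plus_def H.lp_def Let_def H.Z_def H.bexp_def H.s_def H.q_def H.Q_def xs_def)
  have part1: "hgpm_lam_minus m d p f i x0 k \<le> hgpm_lam_minus m d p f i x0 (k + 1) \<and>
            hgpm_lam_minus m d p f i x0 (k + 1) \<le> tnorm m d p f \<and>
            tnorm m d p f \<le> hgpm_lam_plus m d p f i x0 (k + 1) \<and>
            hgpm_lam_plus m d p f i x0 (k + 1) \<le> hgpm_lam_plus m d p f i x0 k" if k: "k \<ge> 1" for k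
  proof -
    obtain k' where k': "k = Suc k'" using k by (cases k) auto
    have e: "xs k = H.NX (xs k')" using k' xs_Suc by simp
    show ?thesis
      using H.lm_mono[OF adm[of k']] H.lp_mono[OF adm[of k']] H.lower[OF adm[of k]] H.upper[OF adm[of k]]
      unfolding lmeq lpeq using k' e by simp
  qed
  have bnd: "hgpm_lam_minus m d p f i x0 k \<le> tnorm m d p f \<and> tnorm m d p f \<le> hgpm_lam_plus m d p f i x0 k" for k
    unfolding lmeq lpeq using H.lower[OF adm] H.upper[OF adm] by auto
  have part2: "\<forall>k\<ge>1. hgpm_lam_plus m d p f i x0 k - hgpm_lam_minus m d p f i x0 k < \<epsilon> \<and>
             (\<forall>k'\<in>{1..<k}. \<not> (hgpm_lam_plus m d p f i x0 k' - hgpm_lam_minus m d p f i x0 k' < \<epsilon>))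
           \<longrightarrow> \<bar>(hgpm_lam_minus m d p f i x0 k + hgpm_lam_plus m d p f i x0 k) / 2 - tnorm m d p f\<bar> < \<epsilon>"
  proof (intro allI impI)
    fix k :: nat
    assume "1 \<le> k" "hgpm_lam_plus m d p f i x0 k - hgpm_lam_minus m d p f i x0 k < \<epsilon> \<and>
             (\<forall>k'\<in>{1..<k}. \<not> (hgpm_lam_plus m d p f i x0 k' - hgpm_lam_minus m d p f i x0 k' < \<epsilon>))"
    then have lt: "hgpm_lam_plus m d p f i x0 k - hgpm_lam_minus m d p f i x0 k < \<epsilon>" by blast
    show "\<bar>(hgpm_lam_minus m d p f i x0 k + hgpm_lam_plus m d p f i x0 k) / 2 - tnorm m d p f\<bar> < \<epsilon>"
      using bnd[of k] lt by (intro mid_lemma) auto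
  qed
  show ?thesis using part1 part2 by blast
qed

end
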